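(* For every $m=1,\dots,M$, every admissible policy $\Gamma$ and every fixed $\epsilon>0$, $$\mathbf P_m\Big(\max_{1\le t\le n}\Delta S_m(t)\ge n\big(I^*(M,K)+\epsilon\big)\,\Big|\,\Gamma\Big)\to0\quad\text{as }n\to\infty.$$
   Context: Model. Fix integers $M\ge2$, $1\le K\le M$. There are $M$ cells, exactly one containing a target; $H_m$: the target is in cell $m$. $f,g$ are probability densities w.r.t. a common measure with $0<D(g\|f),D(f\|g)<\infty$ ($D(p\|q)=\int p\log(p/q)$), and $\log(g(Y)/f(Y))$ has finite moment generating function near $0$ for $Y\sim f$ and $Y\sim g$. At each time $n$ a set $\phi(n)$ of $K$ distinct cells is selected (possibly randomized, depending on past selections and observations) and an observation $y_k(n)$ is obtained from each $k\in\phi(n)$; under $H_m$ observations are independent with law $g$ from cell $m$ and $f$ otherwise. $\mathbf P_m$: probability under $H_m$. Notation. $\ell_k(n)=\log\frac{g(y_k(n))}{f(y_k(n))}$, $\mathbf1_k(n)$ indicates cell $k$ is observed at time $n$, $S_k(n)=\sum_{t\le n}\ell_k(t)\mathbf1_k(t)$, $\Delta S_m(n)=\min_{j\ne m}(S_m(n)-S_j(n))$. $I^*(M,K)=D(g\|f)+D(f\|g)$ if $K=M$; $I^*(M,K)=\max\big[\frac{KD(f\|g)}{M-1},D(g\|f)+\frac{(K-1)D(f\|g)}{M-1}\big]$ if $K<M$. *)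

theory Defs
  imports "HOL-Probability.Probability"
begin

definition KLD :: "'a measure \<Rightarrow> ('a \<Rightarrow> real) \<Rightarrow> ('a \<Rightarrow> real) \<Rightarrow> real" where
  "KLD N p q = (\<integral>x. p x * ln (p x / q x) \<partial>N)"

definition LLR :: "('a \<Rightarrow> real) \<Rightarrow> ('a \<Rightarrow> real) \<Rightarrow> 'a \<Rightarrow> real" where
  "LLR f g y = ln (g y / f y)"

(* I*(M,K), with Dgf = D(g||f), Dfg = D(f||g) *)
definition Istar :: "nat \<Rightarrow> nat \<Rightarrow> real \<Rightarrow> real \<Rightarrow> real" where
  "Istar M K Dgf Dfg =
     (if K = M then Dgf + Dfg
      else max (real K * Dfg / (real M - 1)) (Dgf + (real K - 1) * Dfg / (real M - 1)))"

(* Cells are 0..M-1, times are 1,2,...  Y k t \<omega> is the observation that cell k would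
   produce at time t; it is seen only if k \<in> phi t \<omega>. *)

definition obs_hist ::
  "(nat \<Rightarrow> 'w \<Rightarrow> nat set) \<Rightarrow> (nat \<Rightarrow> nat \<Rightarrow> 'w \<Rightarrow> 'a) \<Rightarrow> nat \<Rightarrow> 'w \<Rightarrow> nat \<Rightarrow> nat \<Rightarrow> 'a option" where
  "obs_hist phi Y n \<omega> = (\<lambda>t k. if 1 \<le> t \<and> t < n \<and> k \<in> phi t \<omega> then Some (Y k t \<omega>) else None)"

definition past_sigma ::
  "nat \<Rightarrow> 'w measure \<Rightarrow> 'u measure \<Rightarrow> ('w \<Rightarrow> 'u) \<Rightarrow> 'a measure \<Rightarrow> (nat \<Rightarrow> nat \<Rightarrow> 'w \<Rightarrow> 'a)
    \<Rightarrow> nat \<Rightarrow> 'w measure" where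
  "past_sigma M P Ru U N Y n = sigma (space P)
     ({U -` A \<inter> space P | A. A \<in> sets Ru} \<union>
      {Y k t -` A \<inter> space P | A k t. A \<in> sets N \<and> k < M \<and> 1 \<le> t \<and> t < n})"

(* Probabilistic model under hypothesis H_m: independent samples, law g in cell m, f elsewhere,
   plus an independent randomisation variable U (for randomised policies). *)
definition search_model ::
  "nat \<Rightarrow> nat \<Rightarrow> 'w measure \<Rightarrow> 'a measure \<Rightarrow> ('a \<Rightarrow> real) \<Rightarrow> ('a \<Rightarrow> real) \<Rightarrow> 'u measure
    \<Rightarrow> ('w \<Rightarrow> 'u) \<Rightarrow> (nat \<Rightarrow> nat \<Rightarrow> 'w \<Rightarrow> 'a) \<Rightarrow> bool" where
  "search_model M m P N f g Ru U Y \<longleftrightarrow>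
     prob_space P \<and>
     U \<in> measurable P Ru \<and>
     (\<forall>k<M. \<forall>t\<ge>1. distributed P N (Y k t) (\<lambda>x. ennreal (if k = m then g x else f x))) \<and>
     prob_space.indep_sets P
       (\<lambda>i. case i of None \<Rightarrow> sets (vimage_algebra (space P) U Ru)
                    | Some (k, t) \<Rightarrow> sets (vimage_algebra (space P) (Y k t) N))
       (insert None (Some ` ({..<M} \<times> {1..})))"

definition admissible ::
  "nat \<Rightarrow> nat \<Rightarrow> 'w measure \<Rightarrow> 'u measure \<Rightarrow> ('w \<Rightarrow> 'u) \<Rightarrow> 'a measure \<Rightarrow> (nat \<Rightarrow> nat \<Rightarrow> 'w \<Rightarrow> 'a)
    \<Rightarrow> (nat \<Rightarrow> 'w \<Rightarrow> nat set) \<Rightarrow> bool" where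
  "admissible M K P Ru U N Y phi \<longleftrightarrow>
     (\<forall>n\<ge>1. \<forall>\<omega>\<in>space P. phi n \<omega> \<subseteq> {..<M} \<and> card (phi n \<omega>) = K) \<and>
     (\<exists>\<pi>. \<forall>n\<ge>1. \<forall>\<omega>\<in>space P. phi n \<omega> = \<pi> n (U \<omega>) (obs_hist phi Y n \<omega>)) \<and>
     (\<forall>n\<ge>1. phi n \<in> measurable (past_sigma M P Ru U N Y n) (count_space UNIV))"

definition cumS ::
  "('a \<Rightarrow> real) \<Rightarrow> ('a \<Rightarrow> real) \<Rightarrow> (nat \<Rightarrow> 'w \<Rightarrow> nat set) \<Rightarrow> (nat \<Rightarrow> nat \<Rightarrow> 'w \<Rightarrow> 'a)
    \<Rightarrow> nat \<Rightarrow> nat \<Rightarrow> 'w \<Rightarrow> real" where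
  "cumS f g phi Y k n \<omega> = (\<Sum>t\<in>{1..n}. if k \<in> phi t \<omega> then LLR f g (Y k t \<omega>) else 0)"

definition DeltaS ::
  "nat \<Rightarrow> ('a \<Rightarrow> real) \<Rightarrow> ('a \<Rightarrow> real) \<Rightarrow> (nat \<Rightarrow> 'w \<Rightarrow> nat set) \<Rightarrow> (nat \<Rightarrow> nat \<Rightarrow> 'w \<Rightarrow> 'a)
    \<Rightarrow> nat \<Rightarrow> nat \<Rightarrow> 'w \<Rightarrow> real" where
  "DeltaS M f g phi Y m n \<omega> =
     Min ((\<lambda>j. cumS f g phi Y m n \<omega> - cumS f g phi Y j n \<omega>) ` ({..<M} - {m}))"

end

theory Submission
  imports Defs
begin


lemma kolmo:
  fixes P :: "'w measure" and F :: "nat \<Rightarrow> 'w measure"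
    and b W :: "nat \<Rightarrow> 'w \<Rightarrow> real" and C lam :: real
  assumes PS: "prob_space P"
    and Fsub: "\<And>s (X::'w\<Rightarrow>real). X \<in> borel_measurable (F s) \<Longrightarrow> X \<in> borel_measurable P"
    and Fmono: "\<And>s s' (X::'w\<Rightarrow>real). s \<le> s' \<Longrightarrow> X \<in> borel_measurable (F s) \<Longrightarrow> X \<in> borel_measurable (F s')"
    and bmeas: "\<And>s. 1 \<le> s \<Longrightarrow> b s \<in> borel_measurable (F s)"
    and b01: "\<And>s \<omega>. b s \<omega> = 0 \<or> b s \<omega> = 1"
    and Wmeas: "\<And>s. 1 \<le> s \<Longrightarrow> W s \<in> borel_measurable (F (Suc s))"
    and Wmean: "\<And>s. 1 \<le> s \<Longrightarrow> integral\<^sup>L P (W s) = 0"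
    and Wsq: "\<And>s. 1 \<le> s \<Longrightarrow> integral\<^sup>L P (\<lambda>\<omega>. (W s \<omega>)\<^sup>2) \<le> C"
    and ind1: "\<And>s X. 1 \<le> s \<Longrightarrow> X \<in> borel_measurable (F s) \<Longrightarrow> integrable P X \<Longrightarrow>
        integrable P (\<lambda>\<omega>. X \<omega> * W s \<omega>) \<and>
        integral\<^sup>L P (\<lambda>\<omega>. X \<omega> * W s \<omega>) = integral\<^sup>L P X * integral\<^sup>L P (W s)"
    and ind2: "\<And>s X. 1 \<le> s \<Longrightarrow> X \<in> borel_measurable (F s) \<Longrightarrow> integrable P X \<Longrightarrow>
        integrable P (\<lambda>\<omega>. X \<omega> * (W s \<omega>)\<^sup>2) \<and>
        integral\<^sup>L P (\<lambda>\<omega>. X \<omega> * (W s \<omega>)\<^sup>2) = integral\<^sup>L P X * integral\<^sup>L P (\<lambda>\<omega>. (W s \<omega>)\<^sup>2)"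
    and lam: "0 < lam"
  shows "measure P {\<omega> \<in> space P. \<exists>t\<in>{1..n}. lam \<le> (\<Sum>s\<in>{1..t}. b s \<omega> * W s \<omega>)}
          \<le> real n * C / lam\<^sup>2"
proof -
  interpret prob_space P by (rule PS)
  define A where "A t \<omega> = (\<Sum>s\<in>{1..t}. b s \<omega> * W s \<omega>)" for t \<omega>
  have b2: "b s \<omega> * b s \<omega> = b s \<omega>" for s \<omega> using b01[of s \<omega>] by auto
  have babs: "\<bar>b s \<omega>\<bar> \<le> 1" for s \<omega> using b01[of s \<omega>] by auto
  have bint: "integrable P (b s)" if "1 \<le> s" for s
    by (rule integrable_const_bound[where B=1]) (use babs Fsub[OF bmeas[OF that]] in auto)
  have Xb: "integrable P (\<lambda>\<omega>. X \<omega> * b s \<omega>)" if "integrable P X" "1 \<le> s" for X s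
    by (rule Bochner_Integration.integrable_bound[OF that(1)])
       (use Fsub[OF bmeas[OF that(2)]] that babs in \<open>auto simp: abs_mult intro!: mult_left_le\<close>)
  have Xbm: "(\<lambda>\<omega>. X \<omega> * b s \<omega>) \<in> borel_measurable (F s)" if "X \<in> borel_measurable (F s)" "1 \<le> s" for X s
    using that bmeas by measurable
  have orth: "integrable P (\<lambda>\<omega>. X \<omega> * (b s \<omega> * W s \<omega>)) \<and>
      integral\<^sup>L P (\<lambda>\<omega>. X \<omega> * (b s \<omega> * W s \<omega>)) = 0"
    if "X \<in> borel_measurable (F s)" "integrable P X" "1 \<le> s" for X s
    using ind1[OF that(3) Xbm[OF that(1,3)] Xb[OF that(2,3)]] Wmean[OF that(3)]
    by (simp add: mult.assoc)
  have dint: "integrable P (\<lambda>\<omega>. b s \<omega> * W s \<omega>)" if "1 \<le> s" for s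
    using ind1[OF that bmeas[OF that] bint[OF that]] by simp
  have d2: "integrable P (\<lambda>\<omega>. (b s \<omega> * W s \<omega>)\<^sup>2) \<and> integral\<^sup>L P (\<lambda>\<omega>. (b s \<omega> * W s \<omega>)\<^sup>2) \<le> C"
    if "1 \<le> s" for s
  proof -
    have e: "(\<lambda>\<omega>. (b s \<omega> * W s \<omega>)\<^sup>2) = (\<lambda>\<omega>. b s \<omega> * (W s \<omega>)\<^sup>2)"
      by (auto simp: power2_eq_square b2 algebra_simps)
    have i: "integrable P (\<lambda>\<omega>. b s \<omega> * (W s \<omega>)\<^sup>2)" and
      v: "integral\<^sup>L P (\<lambda>\<omega>. b s \<omega> * (W s \<omega>)\<^sup>2) = integral\<^sup>L P (b s) * integral\<^sup>L P (\<lambda>\<omega>. (W s \<omega>)\<^sup>2)"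
      using ind2[OF that bmeas[OF that] bint[OF that]] by auto
    have bnn: "0 \<le> b s \<omega>" for \<omega> using b01[of s \<omega>] by auto
    have "0 \<le> integral\<^sup>L P (b s)" using bnn by (intro integral_nonneg_AE AE_I2) auto
    moreover have "integral\<^sup>L P (b s) \<le> 1"
    proof -
      have "integral\<^sup>L P (b s) \<le> integral\<^sup>L P (\<lambda>_. 1::real)"
        by (intro integral_mono bint[OF that]) (use abs_le_D1[OF babs] in auto)
      then show ?thesis by (simp add: prob_space)
    qed
    moreover have "0 \<le> integral\<^sup>L P (\<lambda>\<omega>. (W s \<omega>)\<^sup>2)" by simp
    ultimately have "integral\<^sup>L P (b s) * integral\<^sup>L P (\<lambda>\<omega>. (W s \<omega>)\<^sup>2) \<le> C"
      using Wsq[OF that] by (meson dual_order.trans mult_left_le_one_le)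
    then show ?thesis using i v e by simp
  qed
  have Ameas: "A t \<in> borel_measurable (F (Suc t))" for t
  proof (induction t)
    case 0 then show ?case by (simp add: A_def)
  next
    case (Suc t)
    have e: "A (Suc t) = (\<lambda>\<omega>. A t \<omega> + b (Suc t) \<omega> * W (Suc t) \<omega>)"
      by (auto simp: A_def)
    have "A t \<in> borel_measurable (F (Suc (Suc t)))" using Fmono[OF _ Suc] by simp
    moreover have "b (Suc t) \<in> borel_measurable (F (Suc (Suc t)))" using Fmono[OF _ bmeas[of "Suc t"]] by simp
    moreover have "W (Suc t) \<in> borel_measurable (F (Suc (Suc t)))" using Wmeas[of "Suc t"] by simp
    ultimately show ?case unfolding e by measurable
  qed
  have Aint: "integrable P (A t)" for t
    unfolding A_def by (rule Bochner_Integration.integrable_sum, rule dint) auto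
  have A2: "integrable P (\<lambda>\<omega>. (A t \<omega>)\<^sup>2) \<and> integral\<^sup>L P (\<lambda>\<omega>. (A t \<omega>)\<^sup>2) \<le> real t * C" for t
  proof (induction t)
    case 0 then show ?case by (simp add: A_def)
  next
    case (Suc t)
    have e: "(\<lambda>\<omega>. (A (Suc t) \<omega>)\<^sup>2) = (\<lambda>\<omega>. (A t \<omega>)\<^sup>2 + 2 * (A t \<omega> * (b (Suc t) \<omega> * W (Suc t) \<omega>))
       + (b (Suc t) \<omega> * W (Suc t) \<omega>)\<^sup>2)"
      by (auto simp: A_def power2_eq_square algebra_simps)
    have o: "integrable P (\<lambda>\<omega>. A t \<omega> * (b (Suc t) \<omega> * W (Suc t) \<omega>)) \<and>
      integral\<^sup>L P (\<lambda>\<omega>. A t \<omega> * (b (Suc t) \<omega> * W (Suc t) \<omega>)) = 0"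
      by (rule orth[OF Ameas Aint]) simp
    have d: "integrable P (\<lambda>\<omega>. (b (Suc t) \<omega> * W (Suc t) \<omega>)\<^sup>2) \<and>
       integral\<^sup>L P (\<lambda>\<omega>. (b (Suc t) \<omega> * W (Suc t) \<omega>)\<^sup>2) \<le> C" by (rule d2) simp
    let ?a = "\<lambda>\<omega>. (A t \<omega>)\<^sup>2" and ?b = "\<lambda>\<omega>. A t \<omega> * (b (Suc t) \<omega> * W (Suc t) \<omega>)"
      and ?c = "\<lambda>\<omega>. (b (Suc t) \<omega> * W (Suc t) \<omega>)\<^sup>2"
    have ia: "integrable P ?a" and ib: "integrable P ?b" and ic: "integrable P ?c"
      using Suc o d by auto
    have i2b: "integrable P (\<lambda>\<omega>. 2 * ?b \<omega>)" using ib by simp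
    have int: "integrable P (\<lambda>\<omega>. ?a \<omega> + 2 * ?b \<omega> + ?c \<omega>)"
      using ia i2b ic by simp
    have "integral\<^sup>L P (\<lambda>\<omega>. ?a \<omega> + 2 * ?b \<omega> + ?c \<omega>) = integral\<^sup>L P ?a + integral\<^sup>L P (\<lambda>\<omega>. 2 * ?b \<omega>) + integral\<^sup>L P ?c"
      using ia i2b ic by (simp add: Bochner_Integration.integral_add)
    also have "\<dots> = integral\<^sup>L P ?a + integral\<^sup>L P ?c" using o by simp
    also have "\<dots> \<le> real t * C + C" using Suc d by linarith
    finally show ?case unfolding e using int by (simp add: algebra_simps)
  qed

  define cnd where "cnd t \<omega> \<longleftrightarrow> lam \<le> A t \<omega> \<and> (\<forall>s\<in>{1..<t}. A s \<omega> < lam)" for t \<omega>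
  define e where "e t \<omega> = (if cnd t \<omega> then 1 else (0::real))" for t \<omega>
  have Amono: "A s \<in> borel_measurable (F (Suc t))" if "s \<le> t" for s t
    using Fmono[OF _ Ameas[of s]] that by simp
  have emeas: "e t \<in> borel_measurable (F (Suc t))" for t
  proof -
    have 1: "{\<omega> \<in> space (F (Suc t)). A s \<omega> < lam} \<in> sets (F (Suc t))" if "s \<le> t" for s
      using Amono[OF that] by measurable
    have 2: "{\<omega> \<in> space (F (Suc t)). lam \<le> A t \<omega>} \<in> sets (F (Suc t))"
      using Amono[of t t] by measurable
    have "{\<omega> \<in> space (F (Suc t)). cnd t \<omega>} \<in> sets (F (Suc t))"
      unfolding cnd_def
      by (intro sets.sets_Collect_conj 2 sets.sets_Collect_finite_All 1) auto
    then show ?thesis unfolding e_def by (intro measurable_If) auto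
  qed
  have e01: "0 \<le> e t \<omega> \<and> e t \<omega> \<le> 1" for t \<omega> by (simp add: e_def)
  have eint: "integrable P (e t)" for t
    by (rule integrable_const_bound[where B=1]) (use e01 Fsub[OF emeas] in auto)
  have An2int: "integrable P (\<lambda>\<omega>. (A t \<omega>)\<^sup>2 * e t' \<omega>)" for t t'
  proof (rule Bochner_Integration.integrable_bound[OF conjunct1[OF A2[of t]]])
    have [measurable]: "e t' \<in> borel_measurable P" "A t \<in> borel_measurable P"
      using Fsub[OF emeas] Fsub[OF Ameas] by auto
    show "(\<lambda>\<omega>. (A t \<omega>)\<^sup>2 * e t' \<omega>) \<in> borel_measurable P" by measurable
    show "AE \<omega> in P. norm ((A t \<omega>)\<^sup>2 * e t' \<omega>) \<le> norm ((A t \<omega>)\<^sup>2)"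
      using e01 by (intro AE_I2) (auto simp: abs_mult intro!: mult_left_le)
  qed
  have key: "lam\<^sup>2 * integral\<^sup>L P (e t) \<le> integral\<^sup>L P (\<lambda>\<omega>. (A n \<omega>)\<^sup>2 * e t \<omega>)"
    if t: "t \<in> {1..n}" for t
  proof -
    define R where "R \<omega> = (\<Sum>s\<in>{Suc t..n}. b s \<omega> * W s \<omega>)" for \<omega>
    have split: "A n \<omega> = A t \<omega> + R \<omega>" for \<omega>
    proof -
      have "n = t + (n - t)" using t by simp
      then have "A n \<omega> = (\<Sum>s\<in>{1..t + (n-t)}. b s \<omega> * W s \<omega>)" unfolding A_def by simp
      also have "\<dots> = A t \<omega> + (\<Sum>s\<in>{t+1..t + (n-t)}. b s \<omega> * W s \<omega>)"
        unfolding A_def by (rule sum.ub_add_nat) simp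
      also have "\<dots> = A t \<omega> + R \<omega>" unfolding R_def using t by simp
      finally show ?thesis .
    qed
    have Xm: "(\<lambda>\<omega>. A t \<omega> * e t \<omega>) \<in> borel_measurable (F (Suc t))"
      using Ameas[of t] emeas[of t] by measurable
    have Xi: "integrable P (\<lambda>\<omega>. A t \<omega> * e t \<omega>)"
      by (rule Bochner_Integration.integrable_bound[OF Aint[of t]])
         (use Fsub[OF Xm] e01 in \<open>auto simp: abs_mult intro!: mult_left_le\<close>)
    have oR: "integrable P (\<lambda>\<omega>. A t \<omega> * e t \<omega> * R \<omega>) \<and> integral\<^sup>L P (\<lambda>\<omega>. A t \<omega> * e t \<omega> * R \<omega>) = 0"
    proof -
      have each: "integrable P (\<lambda>\<omega>. A t \<omega> * e t \<omega> * (b s \<omega> * W s \<omega>)) \<and>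
          integral\<^sup>L P (\<lambda>\<omega>. A t \<omega> * e t \<omega> * (b s \<omega> * W s \<omega>)) = 0" if "s \<in> {Suc t..n}" for s
        by (rule orth[OF Fmono[OF _ Xm] Xi]) (use that in auto)
      have eq: "(\<lambda>\<omega>. A t \<omega> * e t \<omega> * R \<omega>) = (\<lambda>\<omega>. \<Sum>s\<in>{Suc t..n}. A t \<omega> * e t \<omega> * (b s \<omega> * W s \<omega>))"
        by (auto simp: R_def sum_distrib_left)
      have "integrable P (\<lambda>\<omega>. \<Sum>s\<in>{Suc t..n}. A t \<omega> * e t \<omega> * (b s \<omega> * W s \<omega>))"
        by (rule Bochner_Integration.integrable_sum) (use each in blast)
      moreover have "integral\<^sup>L P (\<lambda>\<omega>. \<Sum>s\<in>{Suc t..n}. A t \<omega> * e t \<omega> * (b s \<omega> * W s \<omega>)) = 0"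
        by (subst Bochner_Integration.integral_sum) (use each in auto)
      ultimately show ?thesis unfolding eq by simp
    qed
    have pw: "lam\<^sup>2 * e t \<omega> \<le> (A t \<omega>)\<^sup>2 * e t \<omega>
         \<and> (A t \<omega>)\<^sup>2 * e t \<omega> + 2 * (A t \<omega> * e t \<omega> * R \<omega>) \<le> (A n \<omega>)\<^sup>2 * e t \<omega>" for \<omega>
    proof (cases "cnd t \<omega>")
      case True
      then have "lam \<le> A t \<omega>" by (simp add: cnd_def)
      then have "lam\<^sup>2 \<le> (A t \<omega>)\<^sup>2" using lam by (intro power_mono) auto
      moreover have "(A t \<omega>)\<^sup>2 + 2 * (A t \<omega> * R \<omega>) \<le> (A n \<omega>)\<^sup>2"
        unfolding split by (simp add: power2_eq_square algebra_simps)
      ultimately show ?thesis using True by (simp add: e_def)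
    next
      case False then show ?thesis by (simp add: e_def)
    qed
    have i2: "integrable P (\<lambda>\<omega>. 2 * (A t \<omega> * e t \<omega> * R \<omega>))" using oR by simp
    have "lam\<^sup>2 * integral\<^sup>L P (e t) = integral\<^sup>L P (\<lambda>\<omega>. lam\<^sup>2 * e t \<omega>)" by simp
    also have "\<dots> \<le> integral\<^sup>L P (\<lambda>\<omega>. (A t \<omega>)\<^sup>2 * e t \<omega>)"
      by (intro integral_mono) (use pw eint An2int in auto)
    also have "\<dots> = integral\<^sup>L P (\<lambda>\<omega>. (A t \<omega>)\<^sup>2 * e t \<omega> + 2 * (A t \<omega> * e t \<omega> * R \<omega>))"
      using An2int i2 oR by (simp add: Bochner_Integration.integral_add)
    also have "\<dots> \<le> integral\<^sup>L P (\<lambda>\<omega>. (A n \<omega>)\<^sup>2 * e t \<omega>)"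
      by (intro integral_mono Bochner_Integration.integrable_add An2int i2) (use pw in auto)
    finally show ?thesis .
  qed
  have uniq: "t1 = t2" if "cnd t1 \<omega>" "cnd t2 \<omega>" "1 \<le> t1" "1 \<le> t2" for t1 t2 \<omega>
  proof (rule ccontr)
    assume "t1 \<noteq> t2"
    then consider "t1 < t2" | "t2 < t1" by linarith
    then show False
    proof cases
      case 1
      then have "t1 \<in> {1..<t2}" using that by auto
      then have "A t1 \<omega> < lam" using that(2) by (auto simp: cnd_def)
      then show False using that(1) by (auto simp: cnd_def)
    next
      case 2
      then have "t2 \<in> {1..<t1}" using that by auto
      then have "A t2 \<omega> < lam" using that(1) by (auto simp: cnd_def)
      then show False using that(2) by (auto simp: cnd_def)
    qed
  qed
  have sum_le1: "(\<Sum>t\<in>{1..n}. e t \<omega>) \<le> 1" for \<omega>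
  proof (cases "\<exists>t\<in>{1..n}. cnd t \<omega>")
    case True
    then obtain t0 where t0: "t0 \<in> {1..n}" "cnd t0 \<omega>" by auto
    have "(\<Sum>t\<in>{1..n}. e t \<omega>) = e t0 \<omega> + (\<Sum>t\<in>{1..n} - {t0}. e t \<omega>)"
      using t0 by (simp add: sum.remove)
    also have "(\<Sum>t\<in>{1..n} - {t0}. e t \<omega>) = 0"
      by (intro sum.neutral) (use uniq t0 in \<open>auto simp: e_def\<close>)
    finally show ?thesis by (simp add: e_def)
  next
    case False then show ?thesis by (simp add: e_def)
  qed
  define E where "E = {\<omega> \<in> space P. \<exists>t\<in>{1..n}. lam \<le> A t \<omega>}"
  have Esets: "E \<in> sets P"
  proof -
    have [measurable]: "A t \<in> borel_measurable P" for t using Fsub[OF Ameas] .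
    show ?thesis unfolding E_def by measurable
  qed
  have ind_le: "indicator E \<omega> \<le> (\<Sum>t\<in>{1..n}. e t \<omega>)" for \<omega>
  proof (cases "\<omega> \<in> E")
    case True
    then have ex: "\<exists>t. 1 \<le> t \<and> t \<le> n \<and> lam \<le> A t \<omega>" by (auto simp: E_def)
    define t0 where "t0 = (LEAST t. 1 \<le> t \<and> t \<le> n \<and> lam \<le> A t \<omega>)"
    have t0: "1 \<le> t0 \<and> t0 \<le> n \<and> lam \<le> A t0 \<omega>" unfolding t0_def by (rule LeastI_ex[OF ex])
    have "A s \<omega> < lam" if "s \<in> {1..<t0}" for s
    proof (rule ccontr)
      assume "\<not> A s \<omega> < lam"
      then have "t0 \<le> s" unfolding t0_def using that t0 by (intro Least_le) auto
      then show False using that by auto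
    qed
    then have "cnd t0 \<omega>" using t0 by (simp add: cnd_def)
    then have "1 \<le> e t0 \<omega>" by (simp add: e_def)
    also have "e t0 \<omega> \<le> (\<Sum>t\<in>{1..n}. e t \<omega>)"
      by (rule member_le_sum) (use t0 e01 in auto)
    finally show ?thesis using True by simp
  next
    case False then show ?thesis using e01 by (simp add: sum_nonneg)
  qed
  have "lam\<^sup>2 * measure P E = lam\<^sup>2 * integral\<^sup>L P (indicator E)"
    using Esets by (simp add: Int_absorb2 E_def)
  also have "\<dots> \<le> lam\<^sup>2 * integral\<^sup>L P (\<lambda>\<omega>. \<Sum>t\<in>{1..n}. e t \<omega>)"
    by (intro mult_left_mono integral_mono) (use ind_le eint Esets in \<open>auto intro!: integrable_real_indicator Bochner_Integration.integrable_sum simp: emeasure_eq_measure\<close>)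
  also have "\<dots> = (\<Sum>t\<in>{1..n}. lam\<^sup>2 * integral\<^sup>L P (e t))"
    using eint by (simp add: sum_distrib_left)
  also have "\<dots> \<le> (\<Sum>t\<in>{1..n}. integral\<^sup>L P (\<lambda>\<omega>. (A n \<omega>)\<^sup>2 * e t \<omega>))"
    by (intro sum_mono key)
  also have "\<dots> = integral\<^sup>L P (\<lambda>\<omega>. (A n \<omega>)\<^sup>2 * (\<Sum>t\<in>{1..n}. e t \<omega>))"
    using An2int by (simp add: sum_distrib_left)
  also have "\<dots> \<le> integral\<^sup>L P (\<lambda>\<omega>. (A n \<omega>)\<^sup>2)"
  proof (intro integral_mono)
    show "integrable P (\<lambda>\<omega>. (A n \<omega>)\<^sup>2 * (\<Sum>t\<in>{1..n}. e t \<omega>))"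
      using An2int by (simp add: sum_distrib_left)
    show "integrable P (\<lambda>\<omega>. (A n \<omega>)\<^sup>2)" using A2 by blast
    fix \<omega> show "(A n \<omega>)\<^sup>2 * (\<Sum>t\<in>{1..n}. e t \<omega>) \<le> (A n \<omega>)\<^sup>2"
      using sum_le1[of \<omega>] by (simp add: mult_left_le)
  qed
  also have "\<dots> \<le> real n * C" using A2 by blast
  finally have "lam\<^sup>2 * measure P E \<le> real n * C" .
  then have "measure P E \<le> real n * C / lam\<^sup>2" using lam by (simp add: field_simps)
  then show ?thesis unfolding E_def A_def .
qed



definition gens :: "nat \<Rightarrow> 'w measure \<Rightarrow> 'u measure \<Rightarrow> ('w \<Rightarrow> 'u) \<Rightarrow> 'a measure \<Rightarrow> (nat \<Rightarrow> nat \<Rightarrow> 'w \<Rightarrow> 'a)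
    \<Rightarrow> nat \<Rightarrow> 'w set set" where
  "gens M P Ru U N Y n = ({U -` A \<inter> space P | A. A \<in> sets Ru} \<union>
      {Y k t -` A \<inter> space P | A k t. A \<in> sets N \<and> k < M \<and> 1 \<le> t \<and> t < n})"

lemma ps_space: "space (past_sigma M P Ru U N Y s) = space P"
  unfolding past_sigma_def by (simp add: space_measure_of_conv)

lemma ps_sets: "sets (past_sigma M P Ru U N Y s) = sigma_sets (space P) (gens M P Ru U N Y s)"
  unfolding past_sigma_def gens_def by (rule sets_measure_of) auto

lemma ps_mono: "s \<le> s' \<Longrightarrow> sets (past_sigma M P Ru U N Y s) \<subseteq> sets (past_sigma M P Ru U N Y s')"
  unfolding ps_sets gens_def
proof (intro sigma_sets_subseteq Un_mono subset_refl)
  assume "s \<le> s'"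
  then show "{Y k t -` A \<inter> space P |A k t. A \<in> sets N \<and> k < M \<and> 1 \<le> t \<and> t < s}
    \<subseteq> {Y k t -` A \<inter> space P |A k t. A \<in> sets N \<and> k < M \<and> 1 \<le> t \<and> t < s'}"
    by (smt (verit) Collect_mono_iff order_less_le_trans)
qed

lemma ps_meas_mono: "s \<le> s' \<Longrightarrow> X \<in> measurable (past_sigma M P Ru U N Y s) L \<Longrightarrow>
    X \<in> measurable (past_sigma M P Ru U N Y s') L"
proof -
  assume a: "s \<le> s'" "X \<in> measurable (past_sigma M P Ru U N Y s) L"
  have "measurable (past_sigma M P Ru U N Y s) L \<subseteq> measurable (past_sigma M P Ru U N Y s') L"
    by (rule measurable_mono) (simp_all add: ps_space ps_mono[OF a(1)])
  then show ?thesis using a(2) by (rule subsetD)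
qed

lemma ps_sub:
  assumes "U \<in> measurable P Ru" "\<And>k t. k < M \<Longrightarrow> 1 \<le> t \<Longrightarrow> Y k t \<in> measurable P N"
  shows "sets (past_sigma M P Ru U N Y s) \<subseteq> sets P"
  unfolding ps_sets
proof (rule sets.sigma_sets_subset)
  have "U -` A \<inter> space P \<in> sets P" if "A \<in> sets Ru" for A
    using assms(1) that by (rule measurable_sets)
  moreover have "Y k t -` A \<inter> space P \<in> sets P" if "A \<in> sets N" "k < M" "1 \<le> t" for A k t
    using assms(2)[OF that(2,3)] that(1) by (rule measurable_sets)
  ultimately show "gens M P Ru U N Y s \<subseteq> sets P" unfolding gens_def by blast
qed

lemma ps_meas_sub:
  assumes "U \<in> measurable P Ru" "\<And>k t. k < M \<Longrightarrow> 1 \<le> t \<Longrightarrow> Y k t \<in> measurable P N"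
  shows "X \<in> measurable (past_sigma M P Ru U N Y s) L \<Longrightarrow> X \<in> measurable P L"
proof -
  assume a: "X \<in> measurable (past_sigma M P Ru U N Y s) L"
  have "measurable (past_sigma M P Ru U N Y s) L \<subseteq> measurable P L"
    by (rule measurable_mono) (simp_all add: ps_space ps_sub[OF assms])
  then show ?thesis using a by (rule subsetD)
qed

lemma ps_Y:
  assumes "Y k t \<in> measurable P N" "k < M" "1 \<le> t" "t < s"
  shows "Y k t \<in> measurable (past_sigma M P Ru U N Y s) N"
proof (rule measurableI)
  show "x \<in> space (past_sigma M P Ru U N Y s) \<Longrightarrow> Y k t x \<in> space N" for x
    using assms(1) by (auto simp: ps_space measurable_def)
  show "Y k t -` A \<inter> space (past_sigma M P Ru U N Y s) \<in> sets (past_sigma M P Ru U N Y s)"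
    if "A \<in> sets N" for A
    unfolding ps_space ps_sets using that assms by (intro sigma_sets.Basic) (auto simp: gens_def)
qed

lemma indep_lemma:
  fixes X :: "'w \<Rightarrow> real" and \<phi> :: "'a \<Rightarrow> real"
  assumes SM: "search_model M m P N f g Ru U Y" and k: "k < M" and s: "1 \<le> s"
    and X: "X \<in> borel_measurable (past_sigma M P Ru U N Y s)" "integrable P X"
    and ph: "\<phi> \<in> borel_measurable N" "integrable P (\<lambda>\<omega>. \<phi> (Y k s \<omega>))"
  shows "integrable P (\<lambda>\<omega>. X \<omega> * \<phi> (Y k s \<omega>)) \<and>
    integral\<^sup>L P (\<lambda>\<omega>. X \<omega> * \<phi> (Y k s \<omega>)) = integral\<^sup>L P X * integral\<^sup>L P (\<lambda>\<omega>. \<phi> (Y k s \<omega>))"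
proof -
  have PS: "prob_space P" and Um: "U \<in> measurable P Ru"
    and D: "\<And>k t. k < M \<Longrightarrow> 1 \<le> t \<Longrightarrow> distributed P N (Y k t) (\<lambda>x. ennreal (if k = m then g x else f x))"
    and I: "prob_space.indep_sets P
       (\<lambda>i. case i of None \<Rightarrow> sets (vimage_algebra (space P) U Ru)
                    | Some (k, t) \<Rightarrow> sets (vimage_algebra (space P) (Y k t) N))
       (insert None (Some ` ({..<M} \<times> {1..})))"
    using SM unfolding search_model_def by auto
  interpret prob_space P by (rule PS)
  have Ym: "Y k t \<in> measurable P N" if "k < M" "1 \<le> t" for k t
    using distributed_measurable[OF D[OF that]] .
  define E where "E = (\<lambda>i. case i of None \<Rightarrow> sets (vimage_algebra (space P) U Ru)
                    | Some (k, t) \<Rightarrow> sets (vimage_algebra (space P) (Y k t) N))"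
  define IJ where "IJ j = (if j then insert None (Some ` ({..<M} \<times> {1..<s})) else {Some (k, s)})" for j
  have I': "indep_sets E (\<Union>j. IJ j)"
    by (rule indep_sets_mono_index[OF _ I[folded E_def]]) (use k s in \<open>auto simp: IJ_def\<close>)
  have Es: "E i = {U -` A \<inter> space P | A. A \<in> sets Ru}" if "i = None" for i
    using that Um by (simp add: E_def sets_vimage_algebra2 measurable_def)
  have Es2: "E (Some (k', t)) = {Y k' t -` A \<inter> space P | A. A \<in> sets N}" if "k' < M" "1 \<le> t" for k' t
    using Ym[OF that] by (simp add: E_def sets_vimage_algebra2 measurable_def)
  have C: "indep_sets (\<lambda>j. sigma_sets (space P) (\<Union>i\<in>IJ j. E i)) UNIV"
  proof (rule indep_sets_collect_sigma)
    show "indep_sets E (\<Union>j\<in>UNIV. IJ j)" using I' by simp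
    show "Int_stable (E i)" if "j \<in> UNIV" "i \<in> IJ j" for i j
    proof -
      have "\<exists>L. E i = sets L" unfolding E_def by (auto split: option.split)
      then obtain L where "E i = sets L" by (elim exE)
      then show ?thesis using sets.Int_stable by simp
    qed
    show "disjoint_family_on IJ UNIV"
      unfolding disjoint_family_on_def IJ_def by auto
  qed
  have UT: "(\<Union>i\<in>IJ True. E i) = gens M P Ru U N Y s"
  proof -
    have "(\<Union>i\<in>IJ True. E i) = E None \<union> (\<Union>kt\<in>{..<M} \<times> {1..<s}. E (Some kt))"
      by (simp add: IJ_def)
    also have "(\<Union>kt\<in>{..<M} \<times> {1..<s}. E (Some kt)) =
       {Y k t -` A \<inter> space P | A k t. A \<in> sets N \<and> k < M \<and> 1 \<le> t \<and> t < s}"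
    proof (intro equalityI subsetI)
      fix B assume "B \<in> (\<Union>kt\<in>{..<M} \<times> {1..<s}. E (Some kt))"
      then obtain k' t where kt: "k' < M" "1 \<le> t" "t < s" "B \<in> E (Some (k', t))" by auto
      then obtain A where "A \<in> sets N" "B = Y k' t -` A \<inter> space P" using Es2[OF kt(1,2)] by auto
      then show "B \<in> {Y k t -` A \<inter> space P | A k t. A \<in> sets N \<and> k < M \<and> 1 \<le> t \<and> t < s}"
        using kt by auto
    next
      fix B assume "B \<in> {Y k t -` A \<inter> space P | A k t. A \<in> sets N \<and> k < M \<and> 1 \<le> t \<and> t < s}"
      then obtain A k' t where kt: "A \<in> sets N" "k' < M" "1 \<le> t" "t < s" "B = Y k' t -` A \<inter> space P"
        by auto
      then have "B \<in> E (Some (k', t))" using Es2[OF kt(2,3)] by auto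
      moreover have "(k', t) \<in> {..<M} \<times> {1..<s}" using kt by auto
      ultimately show "B \<in> (\<Union>kt\<in>{..<M} \<times> {1..<s}. E (Some kt))" by (rule UN_I[rotated])
    qed
    finally show ?thesis using Es[of None] by (simp add: gens_def)
  qed
  have UF: "(\<Union>i\<in>IJ False. E i) = {Y k s -` A \<inter> space P | A. A \<in> sets N}"
    unfolding IJ_def using Es2[OF k s] by simp
  have Xp: "X \<in> borel_measurable P"
    using ps_meas_sub[OF Um Ym X(1)] by auto
  have phm: "(\<lambda>\<omega>. \<phi> (Y k s \<omega>)) \<in> borel_measurable P"
    using Ym[OF k s] ph(1) by measurable
  have iv: "indep_var borel X borel (\<lambda>\<omega>. \<phi> (Y k s \<omega>))"
    unfolding indep_var_eq indep_set_def
  proof (intro conjI indep_sets_mono_sets[OF C])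
    show "random_variable borel X" using Xp by simp
    show "random_variable borel (\<lambda>\<omega>. \<phi> (Y k s \<omega>))" using phm by simp
    fix j :: bool
    show "(case j of True \<Rightarrow> sigma_sets (space P) {X -` A \<inter> space P |A. A \<in> sets borel}
       | False \<Rightarrow> sigma_sets (space P) {(\<lambda>\<omega>. \<phi> (Y k s \<omega>)) -` A \<inter> space P |A. A \<in> sets borel})
       \<subseteq> sigma_sets (space P) (\<Union>i\<in>IJ j. E i)"
    proof (cases j)
      case True
      have "{X -` A \<inter> space P |A. A \<in> sets borel} \<subseteq> sigma_sets (space P) (gens M P Ru U N Y s)"
        using X(1) unfolding ps_sets[symmetric] by (auto simp: measurable_def ps_space)
      then show ?thesis using True UT by (simp add: sigma_sets_mono)
    next
      case False
      have "{(\<lambda>\<omega>. \<phi> (Y k s \<omega>)) -` A \<inter> space P |A. A \<in> sets borel}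
          \<subseteq> {Y k s -` A \<inter> space P | A. A \<in> sets N}"
      proof
        fix B assume "B \<in> {(\<lambda>\<omega>. \<phi> (Y k s \<omega>)) -` A \<inter> space P |A. A \<in> sets borel}"
        then obtain A where A: "A \<in> sets borel" "B = (\<lambda>\<omega>. \<phi> (Y k s \<omega>)) -` A \<inter> space P" by auto
        have "\<phi> -` A \<inter> space N \<in> sets N" using ph(1) A(1) by (auto simp: measurable_def)
        moreover have "B = Y k s -` (\<phi> -` A \<inter> space N) \<inter> space P"
          using A(2) Ym[OF k s] by (auto simp: measurable_def)
        ultimately show "B \<in> {Y k s -` A \<inter> space P | A. A \<in> sets N}"
          by (intro CollectI exI[of _ "\<phi> -` A \<inter> space N"] conjI)
      qed
      then show ?thesis using False UF by (simp add: sigma_sets_subseteq)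
    qed
  qed
  show ?thesis
    using indep_var_lebesgue_integral[OF iv X(2) ph(2)] indep_var_integrable[OF iv X(2) ph(2)] by simp
qed



lemma sq_le_exp: "(x::real)\<^sup>2 \<le> 2 * (exp x + exp (-x))"
proof (cases "0 \<le> x")
  case True
  have "1 + x + x\<^sup>2 / 2 \<le> exp x" by (rule exp_lower_Taylor_quadratic[OF True])
  moreover have "1 + (-x) \<le> exp (-x)" by (rule exp_ge_add_one_self)
  ultimately have "2 + x\<^sup>2 / 2 \<le> exp x + exp (-x)" by linarith
  then have "2 * (2 + x\<^sup>2 / 2) \<le> 2 * (exp x + exp (-x))" by (rule mult_left_mono) simp
  moreover have "2 * (2 + x\<^sup>2 / 2) = 4 + x\<^sup>2" by simp
  ultimately show ?thesis by linarith
next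
  case False
  have "1 + (-x) + (-x)\<^sup>2 / 2 \<le> exp (-x)" by (rule exp_lower_Taylor_quadratic) (use False in auto)
  moreover have "1 + x \<le> exp x" by (rule exp_ge_add_one_self)
  moreover have "(-x)\<^sup>2 = x\<^sup>2" by (rule power2_minus)
  ultimately have "2 + x\<^sup>2 / 2 \<le> exp x + exp (-x)" by linarith
  then have "2 * (2 + x\<^sup>2 / 2) \<le> 2 * (exp x + exp (-x))" by (rule mult_left_mono) simp
  moreover have "2 * (2 + x\<^sup>2 / 2) = 4 + x\<^sup>2" by simp
  ultimately show ?thesis by linarith
qed

lemma abs_le_1_sq: "\<bar>y::real\<bar> \<le> 1 + y\<^sup>2"
proof (cases "\<bar>y\<bar> \<le> 1")
  case True then show ?thesis by (metis add_increasing2 zero_le_power2)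
next
  case False
  then have "\<bar>y\<bar> * 1 \<le> \<bar>y\<bar> * \<bar>y\<bar>" by (intro mult_left_mono) auto
  also have "\<dots> = y\<^sup>2" by (simp add: power2_eq_square abs_mult_self_eq)
  finally show ?thesis by simp
qed

lemma moments:
  fixes h f g :: "'a \<Rightarrow> real" and Z :: "'w \<Rightarrow> 'a" and s0 :: real
  assumes D: "distributed P N Z (\<lambda>x. ennreal (h x))"
    and h0: "\<And>x. 0 \<le> h x" and hm: "h \<in> borel_measurable N" and h1: "(\<integral>\<^sup>+x. ennreal (h x) \<partial>N) = 1"
    and fm: "f \<in> borel_measurable N" and gm: "g \<in> borel_measurable N"
    and s0: "0 < s0"
    and e1: "integrable N (\<lambda>x. h x * exp (s0 * LLR f g x))"
    and e2: "integrable N (\<lambda>x. h x * exp (- s0 * LLR f g x))"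
  shows "integrable P (\<lambda>\<omega>. (LLR f g (Z \<omega>))\<^sup>2)" "integrable P (\<lambda>\<omega>. LLR f g (Z \<omega>))"
    "integral\<^sup>L P (\<lambda>\<omega>. LLR f g (Z \<omega>)) = (\<integral>x. h x * LLR f g x \<partial>N)"
    "\<And>\<phi>. \<phi> \<in> borel_measurable N \<Longrightarrow> integral\<^sup>L P (\<lambda>\<omega>. \<phi> (Z \<omega>)) = (\<integral>x. h x * \<phi> x \<partial>N)"
proof -
  have hm'[measurable]: "h \<in> borel_measurable N" by (rule hm)
  have Lm[measurable]: "LLR f g \<in> borel_measurable N" unfolding LLR_def using fm gm by measurable
  have hi: "integrable N h"
    by (rule integrableI_nonneg) (use hm h0 h1 in auto)
  have b: "h x * (LLR f g x)\<^sup>2 \<le> 2 * (h x * exp (s0 * LLR f g x) + h x * exp (- s0 * LLR f g x)) / s0\<^sup>2" for x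
  proof -
    have "(s0 * LLR f g x)\<^sup>2 \<le> 2 * (exp (s0 * LLR f g x) + exp (- (s0 * LLR f g x)))" by (rule sq_le_exp)
    then have "s0\<^sup>2 * (LLR f g x)\<^sup>2 \<le> 2 * (exp (s0 * LLR f g x) + exp (- s0 * LLR f g x))"
      by (simp add: power_mult_distrib)
    then have "(LLR f g x)\<^sup>2 \<le> 2 * (exp (s0 * LLR f g x) + exp (- s0 * LLR f g x)) / s0\<^sup>2"
      using s0 by (simp add: field_simps)
    then have "h x * (LLR f g x)\<^sup>2 \<le> h x * (2 * (exp (s0 * LLR f g x) + exp (- s0 * LLR f g x)) / s0\<^sup>2)"
      by (rule mult_left_mono[OF _ h0])
    then show ?thesis by (simp add: algebra_simps add_divide_distrib)
  qed
  have i2N: "integrable N (\<lambda>x. h x * (LLR f g x)\<^sup>2)"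
  proof (rule Bochner_Integration.integrable_bound)
    show "integrable N (\<lambda>x. 2 * (h x * exp (s0 * LLR f g x) + h x * exp (- s0 * LLR f g x)) / s0\<^sup>2)"
      using e1 e2 by simp
    show "(\<lambda>x. h x * (LLR f g x)\<^sup>2) \<in> borel_measurable N" by measurable
    show "AE x in N. norm (h x * (LLR f g x)\<^sup>2) \<le> norm (2 * (h x * exp (s0 * LLR f g x) + h x * exp (- s0 * LLR f g x)) / s0\<^sup>2)"
      using b h0 by (intro AE_I2) (auto intro: order_trans[OF _ abs_ge_self])
  qed
  have i1N: "integrable N (\<lambda>x. h x * LLR f g x)"
  proof (rule Bochner_Integration.integrable_bound)
    show "integrable N (\<lambda>x. h x + h x * (LLR f g x)\<^sup>2)" using hi i2N by simp
    show "(\<lambda>x. h x * LLR f g x) \<in> borel_measurable N" by measurable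
    have "\<bar>h x * LLR f g x\<bar> \<le> h x + h x * (LLR f g x)\<^sup>2" for x
    proof -
      have "\<bar>LLR f g x\<bar> \<le> 1 + (LLR f g x)\<^sup>2"
        by (rule abs_le_1_sq)
      then have "h x * \<bar>LLR f g x\<bar> \<le> h x * (1 + (LLR f g x)\<^sup>2)" by (rule mult_left_mono[OF _ h0])
      then show ?thesis using h0 by (simp add: abs_mult algebra_simps)
    qed
    then show "AE x in N. norm (h x * LLR f g x) \<le> norm (h x + h x * (LLR f g x)\<^sup>2)"
      using h0 by (intro AE_I2) (auto intro: order_trans[OF _ abs_ge_self])
  qed
  show "integrable P (\<lambda>\<omega>. (LLR f g (Z \<omega>))\<^sup>2)"
    using distributed_integrable[OF D, of "\<lambda>x. (LLR f g x)\<^sup>2"] i2N h0 by simp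
  show "integrable P (\<lambda>\<omega>. LLR f g (Z \<omega>))"
    using distributed_integrable[OF D, of "LLR f g"] i1N h0 by simp
  show "integral\<^sup>L P (\<lambda>\<omega>. LLR f g (Z \<omega>)) = (\<integral>x. h x * LLR f g x \<partial>N)"
    using distributed_integral[OF D, of "LLR f g"] h0 by simp
  show "integral\<^sup>L P (\<lambda>\<omega>. \<phi> (Z \<omega>)) = (\<integral>x. h x * \<phi> x \<partial>N)" if "\<phi> \<in> borel_measurable N" for \<phi>
    using distributed_integral[OF D that] h0 by simp
qed



lemma per_cell:
  fixes h f g :: "'a \<Rightarrow> real" and c s0 lam :: real and n :: nat
  assumes SM: "search_model M m P N f g Ru U Y" and adm: "admissible M K P Ru U N Y phi"
    and k: "k < M"
    and D: "\<And>t. 1 \<le> t \<Longrightarrow> distributed P N (Y k t) (\<lambda>x. ennreal (h x))"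
    and h0: "\<And>x. 0 \<le> h x" and hm: "h \<in> borel_measurable N" and h1: "(\<integral>\<^sup>+x. ennreal (h x) \<partial>N) = 1"
    and fm: "f \<in> borel_measurable N" and gm: "g \<in> borel_measurable N"
    and s0: "0 < s0"
    and e1: "integrable N (\<lambda>x. h x * exp (s0 * LLR f g x))"
    and e2: "integrable N (\<lambda>x. h x * exp (- s0 * LLR f g x))"
    and lam: "0 < lam"
  shows "measure P {\<omega> \<in> space P. \<exists>t\<in>{1..n}. lam \<le> (\<Sum>s\<in>{1..t}.
            (if k \<in> phi s \<omega> then 1 else 0) * (c * (LLR f g (Y k s \<omega>) - (\<integral>x. h x * LLR f g x \<partial>N))))}
     \<le> real n * (\<integral>x. h x * (c * (LLR f g x - (\<integral>x. h x * LLR f g x \<partial>N)))\<^sup>2 \<partial>N) / lam\<^sup>2"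
proof -
  define \<mu> where "\<mu> = (\<integral>x. h x * LLR f g x \<partial>N)"
  define C where "C = (\<integral>x. h x * (c * (LLR f g x - \<mu>))\<^sup>2 \<partial>N)"
  define F where "F = past_sigma M P Ru U N Y"
  define b where "b = (\<lambda>s \<omega>. if k \<in> phi s \<omega> then 1 else (0::real))"
  define W where "W = (\<lambda>s \<omega>. c * (LLR f g (Y k s \<omega>) - \<mu>))"
  have PS: "prob_space P" and Um: "U \<in> measurable P Ru"
    and DD: "\<And>k t. k < M \<Longrightarrow> 1 \<le> t \<Longrightarrow> distributed P N (Y k t) (\<lambda>x. ennreal (if k = m then g x else f x))"
    using SM unfolding search_model_def by auto
  interpret prob_space P by (rule PS)
  have Ym: "Y k' t \<in> measurable P N" if "k' < M" "1 \<le> t" for k' t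
    using distributed_measurable[OF DD[OF that]] .
  have phim: "phi s \<in> measurable (F s) (count_space UNIV)" if "1 \<le> s" for s
    using adm that unfolding admissible_def F_def by auto
  have Lm[measurable]: "LLR f g \<in> borel_measurable N" unfolding LLR_def using fm gm by measurable
  note mom = moments[OF D _ hm h1 fm gm s0 e1 e2, OF _ h0]
  have Lint: "integrable P (\<lambda>\<omega>. LLR f g (Y k s \<omega>))" "integrable P (\<lambda>\<omega>. (LLR f g (Y k s \<omega>))\<^sup>2)"
    and Lmean: "integral\<^sup>L P (\<lambda>\<omega>. LLR f g (Y k s \<omega>)) = \<mu>" if "1 \<le> s" for s
    using mom[OF that] by (auto simp: \<mu>_def)
  have Wint: "integrable P (W s)" if "1 \<le> s" for s
    unfolding W_def using Lint[OF that] by simp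
  have W2eq: "(\<lambda>\<omega>. (W s \<omega>)\<^sup>2) = (\<lambda>\<omega>. c\<^sup>2 * (LLR f g (Y k s \<omega>))\<^sup>2 - 2 * c\<^sup>2 * \<mu> * LLR f g (Y k s \<omega>) + c\<^sup>2 * \<mu>\<^sup>2)" for s
    by (auto simp: W_def power2_eq_square algebra_simps)
  have W2int: "integrable P (\<lambda>\<omega>. (W s \<omega>)\<^sup>2)" if "1 \<le> s" for s
    unfolding W2eq using Lint[OF that] by simp
  have "measure P {\<omega> \<in> space P. \<exists>t\<in>{1..n}. lam \<le> (\<Sum>s\<in>{1..t}. b s \<omega> * W s \<omega>)}
          \<le> real n * C / lam\<^sup>2"
  proof (rule kolmo[where F=F])
    show "prob_space P" by (rule PS)
    show "X \<in> borel_measurable P" if "X \<in> borel_measurable (F s)" for s X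
    proof -
      have YmA: "\<And>k t. k < M \<Longrightarrow> 1 \<le> t \<Longrightarrow> Y k t \<in> measurable P N" by (rule Ym)
      show ?thesis using ps_meas_sub[where Y=Y and M=M and N=N, OF Um YmA] that unfolding F_def by blast
    qed
    show "X \<in> borel_measurable (F s')" if "s \<le> s'" "X \<in> borel_measurable (F s)" for s s' X
      using ps_meas_mono that unfolding F_def by blast
    show "b s \<in> borel_measurable (F s)" if "1 \<le> s" for s
    proof -
      have "(\<lambda>S. if k \<in> S then 1 else (0::real)) \<in> borel_measurable (count_space UNIV)" by simp
      from measurable_compose[OF phim[OF that] this] show ?thesis by (simp add: b_def)
    qed
    show "b s \<omega> = 0 \<or> b s \<omega> = 1" for s \<omega> by (simp add: b_def)
    show "W s \<in> borel_measurable (F (Suc s))" if "1 \<le> s" for s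
    proof -
      have "Y k s \<in> measurable (F (Suc s)) N" unfolding F_def
        by (rule ps_Y[where Y=Y and k=k and t=s, OF Ym[OF k that] k that]) simp
      then show ?thesis unfolding W_def by measurable
    qed
    show "integral\<^sup>L P (W s) = 0" if "1 \<le> s" for s
      unfolding W_def using Lint[OF that] Lmean[OF that] by (simp add: prob_space)
    show "integral\<^sup>L P (\<lambda>\<omega>. (W s \<omega>)\<^sup>2) \<le> C" if "1 \<le> s" for s
    proof -
      have "integral\<^sup>L P (\<lambda>\<omega>. (W s \<omega>)\<^sup>2) = (\<integral>x. h x * (c * (LLR f g x - \<mu>))\<^sup>2 \<partial>N)"
        unfolding W_def by (rule mom(4)[OF that]) measurable
      then show ?thesis by (simp add: C_def)
    qed
    show "integrable P (\<lambda>\<omega>. X \<omega> * W s \<omega>) \<and>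
        integral\<^sup>L P (\<lambda>\<omega>. X \<omega> * W s \<omega>) = integral\<^sup>L P X * integral\<^sup>L P (W s)"
      if "1 \<le> s" "X \<in> borel_measurable (F s)" "integrable P X" for s X
      using indep_lemma[OF SM k that(1) that(2)[unfolded F_def] that(3), of "\<lambda>x. c * (LLR f g x - \<mu>)"]
        Wint[OF that(1)] unfolding W_def by simp
    show "integrable P (\<lambda>\<omega>. X \<omega> * (W s \<omega>)\<^sup>2) \<and>
        integral\<^sup>L P (\<lambda>\<omega>. X \<omega> * (W s \<omega>)\<^sup>2) = integral\<^sup>L P X * integral\<^sup>L P (\<lambda>\<omega>. (W s \<omega>)\<^sup>2)"
      if "1 \<le> s" "X \<in> borel_measurable (F s)" "integrable P X" for s X
      using indep_lemma[OF SM k that(1) that(2)[unfolded F_def] that(3), of "\<lambda>x. (c * (LLR f g x - \<mu>))\<^sup>2"]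
        W2int[OF that(1)] unfolding W_def by simp
    show "0 < lam" by (rule lam)
  qed
  then show ?thesis unfolding b_def W_def C_def \<mu>_def by simp
qed



lemma ln_div_swap: "0 \<le> a \<Longrightarrow> 0 \<le> b \<Longrightarrow> ln (a / b) = - ln (b / (a::real))"
  by (cases "a = 0"; cases "b = 0") (auto simp: ln_div)

lemma drift_bound:
  fixes Dgf Dfg :: real and Phi :: "nat set" and c \<mu> :: "nat \<Rightarrow> real"
  assumes M: "2 \<le> M" "1 \<le> K" "K \<le> M" "m < M"
    and Phi: "Phi \<subseteq> {..<M}" "card Phi = K"
    and pos: "0 < Dgf" "0 < Dfg"
    and cm: "c m * \<mu> m = (real M - 1) * Dgf"
    and cj: "\<And>j. j \<noteq> m \<Longrightarrow> c j * \<mu> j = Dfg"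
  shows "(\<Sum>k<M. if k \<in> Phi then c k * \<mu> k else 0) \<le> (real M - 1) * Istar M K Dgf Dfg"
proof -
  have fin: "finite Phi" using Phi(1) finite_subset by blast
  have e1: "(\<Sum>k<M. if k \<in> Phi then c k * \<mu> k else 0) = (\<Sum>k\<in>Phi. c k * \<mu> k)"
    using Phi(1) by (simp add: sum.inter_restrict[symmetric] Int_absorb1)
  have M1: "0 < real M - 1" using M by simp
  show ?thesis
  proof (cases "m \<in> Phi")
    case True
    have "(\<Sum>k\<in>Phi. c k * \<mu> k) = c m * \<mu> m + (\<Sum>k\<in>Phi - {m}. c k * \<mu> k)"
      using True fin by (simp add: sum.remove)
    also have "(\<Sum>k\<in>Phi - {m}. c k * \<mu> k) = (\<Sum>k\<in>Phi - {m}. Dfg)"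
      by (intro sum.cong) (auto simp: cj)
    also have "\<dots> = (real K - 1) * Dfg" using True fin Phi(2) M by (simp add: of_nat_diff)
    finally have s: "(\<Sum>k\<in>Phi. c k * \<mu> k) = (real M - 1) * Dgf + (real K - 1) * Dfg" using cm by simp
    show ?thesis
    proof (cases "K = M")
      case True
      then show ?thesis unfolding e1 s Istar_def by (simp add: algebra_simps)
    next
      case False
      have "(real M - 1) * Dgf + (real K - 1) * Dfg = (real M - 1) * (Dgf + (real K - 1) * Dfg / (real M - 1))"
        using M1 by (simp add: field_simps)
      also have "\<dots> \<le> (real M - 1) * Istar M K Dgf Dfg"
        using False M1 by (intro mult_left_mono) (auto simp: Istar_def)
      finally show ?thesis unfolding e1 s .
    qed
  next
    case False
    have "(\<Sum>k\<in>Phi. c k * \<mu> k) = (\<Sum>k\<in>Phi. Dfg)"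
    proof (rule sum.cong)
      fix x assume "x \<in> Phi" then have "x \<noteq> m" using False by auto
      then show "c x * \<mu> x = Dfg" by (rule cj)
    qed simp
    also have "\<dots> = real K * Dfg" using Phi(2) by simp
    finally have s: "(\<Sum>k\<in>Phi. c k * \<mu> k) = real K * Dfg" .
    have KM: "K \<noteq> M"
    proof
      assume "K = M"
      then have "Phi = {..<M}" using Phi fin by (intro card_subset_eq) auto
      then show False using False M by auto
    qed
    have "real K * Dfg = (real M - 1) * (real K * Dfg / (real M - 1))"
      using M1 by (simp add: field_simps)
    also have "\<dots> \<le> (real M - 1) * Istar M K Dgf Dfg"
      using KM M1 by (intro mult_left_mono) (auto simp: Istar_def)
    finally show ?thesis unfolding e1 s .
  qed
qed

lemma delta_le:
  fixes S :: "nat \<Rightarrow> real"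
  assumes M: "2 \<le> M" "m < M"
  shows "(real M - 1) * Min ((\<lambda>j. S m - S j) ` ({..<M} - {m}))
     \<le> (\<Sum>k<M. (if k = m then real M - 1 else -1) * S k)"
proof -
  let ?J = "{..<M} - {m}"
  have cJ: "card ?J = M - 1" using M by simp
  have fin: "finite ?J" by simp
  have "(if m = 0 then 1 else 0) \<in> ?J" using M by auto
  then have ne: "?J \<noteq> {}" by blast
  have "real (card ?J) * Min ((\<lambda>j. S m - S j) ` ?J) \<le> (\<Sum>j\<in>?J. S m - S j)"
    by (rule sum_bounded_below) (simp add: fin)
  also have "\<dots> = real (card ?J) * S m - (\<Sum>j\<in>?J. S j)"
    by (simp add: sum_subtractf)
  also have "\<dots> = (\<Sum>k<M. (if k = m then real M - 1 else -1) * S k)"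
  proof -
    have "(\<Sum>k<M. (if k = m then real M - 1 else -1) * S k)
        = (real M - 1) * S m + (\<Sum>k\<in>?J. (if k = m then real M - 1 else -1) * S k)"
      using M by (simp add: sum.remove)
    also have "(\<Sum>k\<in>?J. (if k = m then real M - 1 else -1) * S k) = - (\<Sum>k\<in>?J. S k)"
      by (simp add: sum_negf[symmetric])
    finally show ?thesis using cJ M by (simp add: of_nat_diff)
  qed
  finally show ?thesis using cJ M by (simp add: of_nat_diff)
qed



theorem lemma4:
  fixes M K m :: nat and \<epsilon> :: real
    and N :: "'a measure" and f g :: "'a \<Rightarrow> real"
    and P :: "'w measure" and Ru :: "'u measure" and U :: "'w \<Rightarrow> 'u"
    and Y :: "nat \<Rightarrow> nat \<Rightarrow> 'w \<Rightarrow> 'a" and phi :: "nat \<Rightarrow> 'w \<Rightarrow> nat set"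
  assumes "2 \<le> M" and "1 \<le> K" and "K \<le> M" and "m < M"
    and "f \<in> borel_measurable N" and "g \<in> borel_measurable N"
    and "\<And>x. 0 \<le> f x" and "\<And>x. 0 \<le> g x"
    and "(\<integral>\<^sup>+x. ennreal (f x) \<partial>N) = 1" and "(\<integral>\<^sup>+x. ennreal (g x) \<partial>N) = 1"
    and "AE x in N. (f x = 0 \<longleftrightarrow> g x = 0)"
    and "integrable N (\<lambda>x. g x * ln (g x / f x))"
    and "integrable N (\<lambda>x. f x * ln (f x / g x))"
    and "0 < KLD N g f" and "0 < KLD N f g"
    and "\<exists>\<delta>>0. \<forall>s. \<bar>s\<bar> < \<delta> \<longrightarrow>
           integrable N (\<lambda>x. f x * exp (s * LLR f g x)) \<and>
           integrable N (\<lambda>x. g x * exp (s * LLR f g x))"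
    and "search_model M m P N f g Ru U Y"
    and "admissible M K P Ru U N Y phi"
    and "0 < \<epsilon>"
  shows "(\<lambda>n. measure P {\<omega> \<in> space P.
            Max ((\<lambda>t. DeltaS M f g phi Y m t \<omega>) ` {1..n})
              \<ge> real n * (Istar M K (KLD N g f) (KLD N f g) + \<epsilon>)})
         \<longlonglongrightarrow> 0"
proof -
  note M = assms(1-4)
  note fm = assms(5) and gm = assms(6) and f0 = assms(7) and g0 = assms(8)
  note SM = assms(17) and adm = assms(18) and eps = assms(19)
  have PS: "prob_space P" and Um: "U \<in> measurable P Ru"
    and DD: "\<And>k t. k < M \<Longrightarrow> 1 \<le> t \<Longrightarrow> distributed P N (Y k t) (\<lambda>x. ennreal (if k = m then g x else f x))"
    using SM unfolding search_model_def by auto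
  interpret prob_space P by (rule PS)
  have Ym: "Y k' t \<in> measurable P N" if "k' < M" "1 \<le> t" for k' t
    using distributed_measurable[OF DD[OF that]] .
  have Lm[measurable]: "LLR f g \<in> borel_measurable N" unfolding LLR_def using fm gm by measurable
  obtain \<delta> where \<delta>: "0 < \<delta>" and mgf: "\<And>s. \<bar>s\<bar> < \<delta> \<Longrightarrow>
      integrable N (\<lambda>x. f x * exp (s * LLR f g x)) \<and> integrable N (\<lambda>x. g x * exp (s * LLR f g x))"
    using assms(16) by blast
  define s0 where "s0 = \<delta> / 2"
  have s0: "0 < s0" "\<bar>s0\<bar> < \<delta>" "\<bar>-s0\<bar> < \<delta>" using \<delta> by (auto simp: s0_def)
  define h where "h = (\<lambda>k x. if k = m then g x else f x)"
  define \<mu> where "\<mu> k = (\<integral>x. h k x * LLR f g x \<partial>N)" for k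
  define c where "c k = (if k = m then real M - 1 else -1)" for k
  define Ck where "Ck k = (\<integral>x. h k x * (c k * (LLR f g x - \<mu> k))\<^sup>2 \<partial>N)" for k
  define A where "A k t \<omega> = (\<Sum>s\<in>{1..t}. (if k \<in> phi s \<omega> then 1 else 0) * (c k * (LLR f g (Y k s \<omega>) - \<mu> k)))" for k t \<omega>
  define Is where "Is = Istar M K (KLD N g f) (KLD N f g)"
  have cell: "measure P {\<omega> \<in> space P. \<exists>t\<in>{1..n}. lam \<le> A k t \<omega>} \<le> real n * Ck k / lam\<^sup>2"
    if k: "k < M" and lam: "0 < lam" for k n lam
  proof -
    have D: "distributed P N (Y k t) (\<lambda>x. ennreal (h k x))" if "1 \<le> t" for t
      using DD[OF k that] by (simp add: h_def)
    have h0: "0 \<le> h k x" for x using f0 g0 by (simp add: h_def)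
    have hm: "h k \<in> borel_measurable N" using fm gm by (cases "k = m") (simp_all add: h_def)
    have h1: "(\<integral>\<^sup>+x. ennreal (h k x) \<partial>N) = 1"
    proof (cases "k = m")
      case True
      then have "h k = g" by (simp add: h_def)
      then show ?thesis using assms(10) by simp
    next
      case False
      then have "h k = f" by (simp add: h_def)
      then show ?thesis using assms(9) by simp
    qed
    have e1: "integrable N (\<lambda>x. h k x * exp (s0 * LLR f g x))"
      using mgf[OF s0(2)] by (cases "k = m") (simp_all add: h_def)
    have e2: "integrable N (\<lambda>x. h k x * exp (- s0 * LLR f g x))"
      using mgf[OF s0(3)] by (cases "k = m") (simp_all add: h_def)
    show ?thesis
      using per_cell[OF SM adm k D h0 hm h1 fm gm s0(1) e1 e2 lam, of n "c k"]
      unfolding A_def Ck_def \<mu>_def by simp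
  qed
  have \<mu>m: "\<mu> m = KLD N g f" by (simp add: \<mu>_def h_def KLD_def LLR_def)
  have \<mu>j: "\<mu> j = - KLD N f g" if "j \<noteq> m" for j
  proof -
    have "\<mu> j = (\<integral>x. - (f x * ln (f x / g x)) \<partial>N)"
      unfolding \<mu>_def h_def LLR_def using that
      by (intro Bochner_Integration.integral_cong) (auto simp: ln_div_swap[OF g0 f0])
    then show ?thesis by (simp add: KLD_def)
  qed
  have M1: "0 < real M - 1" using M by simp
  have Is0: "0 \<le> Is"
  proof -
    have a: "0 \<le> real K * KLD N f g / (real M - 1)" using assms(15) M1 by simp
    show ?thesis
    proof (cases "K = M")
      case True then show ?thesis using assms(14,15) by (simp add: Is_def Istar_def)
    next
      case False then show ?thesis using a by (simp add: Is_def Istar_def max.coboundedI1)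
    qed
  qed
  have det: "(real M - 1) * DeltaS M f g phi Y m t \<omega> \<le> real t * ((real M - 1) * Is) + (\<Sum>k<M. A k t \<omega>)"
    if \<omega>: "\<omega> \<in> space P" for t \<omega>
  proof -
    define S where "S k = cumS f g phi Y k t \<omega>" for k
    have "(real M - 1) * DeltaS M f g phi Y m t \<omega> \<le> (\<Sum>k<M. c k * S k)"
      using delta_le[OF M(1) M(4), of "\<lambda>k. cumS f g phi Y k t \<omega>"] unfolding DeltaS_def S_def c_def by simp
    also have "\<dots> = (\<Sum>k<M. (\<Sum>s\<in>{1..t}. if k \<in> phi s \<omega> then c k * \<mu> k else 0) + A k t \<omega>)"
    proof (rule sum.cong[OF refl])
      fix k
      have "c k * S k = (\<Sum>s\<in>{1..t}. (if k \<in> phi s \<omega> then c k * \<mu> k else 0) +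
           (if k \<in> phi s \<omega> then 1 else 0) * (c k * (LLR f g (Y k s \<omega>) - \<mu> k)))"
        unfolding S_def cumS_def sum_distrib_left by (intro sum.cong) (auto simp: algebra_simps)
      then show "c k * S k = (\<Sum>s\<in>{1..t}. if k \<in> phi s \<omega> then c k * \<mu> k else 0) + A k t \<omega>"
        by (simp add: sum.distrib A_def)
    qed
    also have "\<dots> = (\<Sum>s\<in>{1..t}. \<Sum>k<M. if k \<in> phi s \<omega> then c k * \<mu> k else 0) + (\<Sum>k<M. A k t \<omega>)"
      by (simp add: sum.distrib sum.swap[of _ "{..<M}"])
    also have "(\<Sum>s\<in>{1..t}. \<Sum>k<M. if k \<in> phi s \<omega> then c k * \<mu> k else 0) \<le> (\<Sum>s\<in>{1..t}. (real M - 1) * Is)"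
    proof (rule sum_mono)
      fix s assume s: "s \<in> {1..t}"
      have Phi: "phi s \<omega> \<subseteq> {..<M}" "card (phi s \<omega>) = K"
        using adm \<omega> s unfolding admissible_def by auto
      show "(\<Sum>k<M. if k \<in> phi s \<omega> then c k * \<mu> k else 0) \<le> (real M - 1) * Is"
        unfolding Is_def
        by (rule drift_bound[OF M Phi assms(14,15)]) (auto simp: c_def \<mu>m \<mu>j)
    qed
    finally show ?thesis by simp
  qed
  have Ameas: "A k t \<in> borel_measurable P" if kM: "k < M" for k t
  proof -
    have "(\<lambda>\<omega>. (if k \<in> phi s \<omega> then 1 else 0) * (c k * (LLR f g (Y k s \<omega>) - \<mu> k))) \<in> borel_measurable P"
      if s: "s \<in> {1..t}" for s
    proof -
      have YmA: "\<And>k t. k < M \<Longrightarrow> 1 \<le> t \<Longrightarrow> Y k t \<in> measurable P N" by (rule Ym)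
      have "phi s \<in> measurable (past_sigma M P Ru U N Y s) (count_space UNIV)"
        using adm s unfolding admissible_def by auto
      then have pm: "phi s \<in> measurable P (count_space UNIV)"
        using ps_meas_sub[where Y=Y and M=M and N=N, OF Um YmA] by blast
      have "(\<lambda>S. if k \<in> S then 1 else (0::real)) \<in> borel_measurable (count_space UNIV)" by simp
      from measurable_compose[OF pm this]
      have [measurable]: "(\<lambda>\<omega>. if k \<in> phi s \<omega> then 1 else (0::real)) \<in> borel_measurable P" by simp
      have [measurable]: "Y k s \<in> measurable P N" using Ym[OF kM] s by auto
      show ?thesis by measurable
    qed
    then show ?thesis unfolding A_def by (rule borel_measurable_sum)
  qed
  define E where "E n = {\<omega> \<in> space P. Max ((\<lambda>t. DeltaS M f g phi Y m t \<omega>) ` {1..n}) \<ge> real n * (Is + \<epsilon>)}" for n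
  define B where "B n k = {\<omega> \<in> space P. \<exists>t\<in>{1..n}. real n * \<epsilon> / real M \<le> A k t \<omega>}" for n k
  define K0 where "K0 = (\<Sum>k<M. Ck k) * (real M)\<^sup>2 / \<epsilon>\<^sup>2"
  have bound: "measure P (E n) \<le> K0 / real n" if n: "1 \<le> n" for n
  proof -
    have Bs: "B n k \<in> sets P" if "k < M" for k
    proof -
      have [measurable]: "A k t \<in> borel_measurable P" for t by (rule Ameas[OF that])
      show ?thesis unfolding B_def by measurable
    qed
    have sub: "E n \<subseteq> (\<Union>k\<in>{..<M}. B n k)"
    proof
      fix \<omega> assume "\<omega> \<in> E n"
      then have \<omega>: "\<omega> \<in> space P" and ge: "Max ((\<lambda>t. DeltaS M f g phi Y m t \<omega>) ` {1..n}) \<ge> real n * (Is + \<epsilon>)"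
        by (auto simp: E_def)
      have "Max ((\<lambda>t. DeltaS M f g phi Y m t \<omega>) ` {1..n}) \<in> (\<lambda>t. DeltaS M f g phi Y m t \<omega>) ` {1..n}"
        using n by (intro Max_in) auto
      then obtain t where t: "t \<in> {1..n}" and "Max ((\<lambda>t. DeltaS M f g phi Y m t \<omega>) ` {1..n}) = DeltaS M f g phi Y m t \<omega>"
        by blast
      with ge have ge': "real n * (Is + \<epsilon>) \<le> DeltaS M f g phi Y m t \<omega>" by simp
      have "(real M - 1) * (real n * (Is + \<epsilon>)) \<le> (real M - 1) * DeltaS M f g phi Y m t \<omega>"
        using ge' M1 by (intro mult_left_mono) auto
      also have "\<dots> \<le> real t * ((real M - 1) * Is) + (\<Sum>k<M. A k t \<omega>)" by (rule det[OF \<omega>])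
      also have "real t * ((real M - 1) * Is) \<le> real n * ((real M - 1) * Is)"
        using t Is0 M1 by (intro mult_right_mono) auto
      finally have "(real M - 1) * (real n * \<epsilon>) \<le> (\<Sum>k<M. A k t \<omega>)"
        by (simp add: algebra_simps)
      moreover have "real n * \<epsilon> \<le> (real M - 1) * (real n * \<epsilon>)"
      proof -
        have "1 \<le> real M - 1" using M by simp
        moreover have "0 \<le> real n * \<epsilon>" using eps by simp
        ultimately have "1 * (real n * \<epsilon>) \<le> (real M - 1) * (real n * \<epsilon>)" by (rule mult_right_mono)
        then show ?thesis by simp
      qed
      ultimately have sumge: "real n * \<epsilon> \<le> (\<Sum>k<M. A k t \<omega>)" by linarith
      have "\<exists>k<M. real n * \<epsilon> / real M \<le> A k t \<omega>"
      proof (rule ccontr)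
        assume "\<not> ?thesis"
        then have "\<And>k. k \<in> {..<M} \<Longrightarrow> A k t \<omega> < real n * \<epsilon> / real M" by auto
        then have "(\<Sum>k<M. A k t \<omega>) < (\<Sum>k<M. real n * \<epsilon> / real M)"
          using M by (intro sum_strict_mono) auto
        also have "\<dots> = real n * \<epsilon>" using M by simp
        finally show False using sumge by simp
      qed
      then show "\<omega> \<in> (\<Union>k\<in>{..<M}. B n k)" using t \<omega> unfolding B_def by blast
    qed
    have "measure P (E n) \<le> measure P (\<Union>k\<in>{..<M}. B n k)"
      by (rule finite_measure_mono[OF sub]) (use Bs in auto)
    also have "\<dots> \<le> (\<Sum>k<M. measure P (B n k))"
      by (rule finite_measure_subadditive_finite) (use Bs in auto)
    also have "\<dots> \<le> (\<Sum>k<M. real n * Ck k / (real n * \<epsilon> / real M)\<^sup>2)"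
    proof (rule sum_mono)
      fix k assume kk: "k \<in> {..<M}"
      have "0 < real n * \<epsilon> / real M" using n eps M by simp
      then show "measure P (B n k) \<le> real n * Ck k / (real n * \<epsilon> / real M)\<^sup>2"
        unfolding B_def by (rule cell[rotated]) (use kk in simp)
    qed
    also have "\<dots> = (\<Sum>k<M. Ck k * ((real M)\<^sup>2 / \<epsilon>\<^sup>2 / real n))"
    proof (rule sum.cong[OF refl])
      fix k
      have "real n \<noteq> 0" "\<epsilon> \<noteq> 0" "real M \<noteq> 0" using n eps M by auto
      then show "real n * Ck k / (real n * \<epsilon> / real M)\<^sup>2 = Ck k * ((real M)\<^sup>2 / \<epsilon>\<^sup>2 / real n)"
        by (simp add: field_simps power2_eq_square)
    qed
    also have "\<dots> = K0 / real n"
      unfolding K0_def by (simp add: sum_distrib_right sum_divide_distrib)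
    finally show ?thesis .
  qed
  have "(\<lambda>n. measure P (E n)) \<longlonglongrightarrow> 0"
  proof (rule tendsto_sandwich[where f="\<lambda>_. 0" and h="\<lambda>n. K0 / real n"])
    show "\<forall>\<^sub>F n in sequentially. 0 \<le> measure P (E n)" by simp
    show "\<forall>\<^sub>F n in sequentially. measure P (E n) \<le> K0 / real n"
      using bound by (intro eventually_sequentiallyI[of 1]) auto
    show "(\<lambda>_. 0) \<longlonglongrightarrow> (0::real)" by simp
    show "(\<lambda>n. K0 / real n) \<longlonglongrightarrow> 0" by (rule lim_const_over_n)
  qed
  then show ?thesis unfolding E_def Is_def .
qed

end
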